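(* Let $d\ge 2$. For every $R \subseteq \{0,1,\dots,d-1\}$, $$\min_{m \in \mathcal{M}_d(R)} \| m - \textsc{max} \|_\infty = \min_{m \in \mathcal{M}^s_d(R)} \| m - \textsc{max} \|_\infty.$$
   Context: For $x\in\mathbb{R}^d$ and nonempty $A\subseteq\{1,\dots,d\}$, $s(x;A)=\max\{x_j:j\in A\}$; $C(k,r,d)$ is the $k$-th $r$-element subset of $\{1,\dots,d\}$ in lexicographic order. $\mathcal{M}_d(R)$ is the set of functions $x\mapsto \beta_0+\sum_{r\in R\setminus\{0\}}\sum_{j=1}^{\binom dr}\beta_r^j s(x;C(j,r,d))$ with real coefficients, the intercept $\beta_0$ present iff $0\in R$. $\mathcal{M}_d^s(R)=\{m\in\mathcal{M}_d(R): m(x_1,\dots,x_d)=m(x_{\sigma_1},\dots,x_{\sigma_d})\text{ for all permutations }\sigma\text{ of }\{1,\dots,d\}\}$. $\textsc{max}(x)=\max_i x_i$ and $\|\cdot\|_\infty$ is the sup norm over $[0,1]^d$. *)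

theory Defs
  imports Complex_Main "HOL-Combinatorics.Permutations"
begin

text \<open>Points of R^d are functions nat => real; only coordinates 1..d matter.\<close>

definition smax :: "(nat \<Rightarrow> real) \<Rightarrow> nat set \<Rightarrow> real" where
  "smax x A = Max (x ` A)"

definition maxd :: "nat \<Rightarrow> (nat \<Rightarrow> real) \<Rightarrow> real" where
  "maxd d x = Max (x ` {1..d})"

definition cube :: "nat \<Rightarrow> (nat \<Rightarrow> real) set" where
  "cube d = {x. \<forall>i\<in>{1..d}. 0 \<le> x i \<and> x i \<le> 1}"

definition supnorm :: "nat \<Rightarrow> ((nat \<Rightarrow> real) \<Rightarrow> real) \<Rightarrow> real" where
  "supnorm d f = (SUP x\<in>cube d. \<bar>f x\<bar>)"

text \<open>M_d(R): the coefficients beta_r^j, j indexing the r-subsets C(j,r,d) in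
  lexicographic order, are represented by a function beta on the r-subsets
  themselves (the lexicographic enumeration is a bijection).\<close>
definition Mset :: "nat \<Rightarrow> nat set \<Rightarrow> ((nat \<Rightarrow> real) \<Rightarrow> real) set" where
  "Mset d R = {m. \<exists>(b0::real) (beta :: nat set \<Rightarrow> real).
      m = (\<lambda>x. (if 0 \<in> R then b0 else 0) +
             (\<Sum>r\<in>R - {0}. \<Sum>A\<in>{A. A \<subseteq> {1..d} \<and> card A = r}. beta A * smax x A))}"

definition Msym :: "nat \<Rightarrow> nat set \<Rightarrow> ((nat \<Rightarrow> real) \<Rightarrow> real) set" where
  "Msym d R = {m \<in> Mset d R. \<forall>\<sigma> x. \<sigma> permutes {1..d} \<longrightarrow> m x = m (\<lambda>i. x (\<sigma> i))}"

end

theory Submission imports Defs "HOL-Analysis.Analysis" begin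

lemma smax_bounds:
  assumes "finite A" "A \<noteq> {}" "A \<subseteq> {1..d}" "x \<in> cube d"
  shows "0 \<le> smax x A \<and> smax x A \<le> 1"
proof -
  have "smax x A \<in> x ` A" unfolding smax_def using assms by (intro Max_in) auto
  then obtain a where "a \<in> A" "smax x A = x a" by auto
  then show ?thesis using assms unfolding cube_def by auto
qed

lemma maxd_bounds:
  assumes "d \<ge> 1" "x \<in> cube d"
  shows "0 \<le> maxd d x \<and> maxd d x \<le> 1"
  using smax_bounds[of "{1..d}" d x] assms unfolding smax_def maxd_def by auto

lemma Mset_bound:
  assumes "m \<in> Mset d R"
  shows "\<exists>K. \<forall>x\<in>cube d. \<bar>m x\<bar> \<le> K"
proof -
  obtain b0 beta where m: "m = (\<lambda>x. (if 0 \<in> R then b0 else 0) +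
             (\<Sum>r\<in>R - {0}. \<Sum>A\<in>{A. A \<subseteq> {1..d} \<and> card A = r}. beta A * smax x A))"
    using assms unfolding Mset_def by blast
  have "\<bar>m x\<bar> \<le> \<bar>b0\<bar> + (\<Sum>r\<in>R - {0}. \<Sum>A\<in>{A. A \<subseteq> {1..d} \<and> card A = r}. \<bar>beta A\<bar>)"
    if x: "x \<in> cube d" for x
  proof -
    have "\<bar>m x\<bar> \<le> \<bar>if 0 \<in> R then b0 else 0\<bar> + \<bar>\<Sum>r\<in>R - {0}. \<Sum>A\<in>{A. A \<subseteq> {1..d} \<and> card A = r}. beta A * smax x A\<bar>"
      unfolding m by (rule abs_triangle_ineq)
    also have "\<dots> \<le> \<bar>b0\<bar> + (\<Sum>r\<in>R - {0}. \<Sum>A\<in>{A. A \<subseteq> {1..d} \<and> card A = r}. \<bar>beta A\<bar>)"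
    proof (rule add_mono)
      show "\<bar>if 0 \<in> R then b0 else 0\<bar> \<le> \<bar>b0\<bar>" by auto
      have "\<bar>\<Sum>r\<in>R - {0}. \<Sum>A\<in>{A. A \<subseteq> {1..d} \<and> card A = r}. beta A * smax x A\<bar>
         \<le> (\<Sum>r\<in>R - {0}. \<bar>\<Sum>A\<in>{A. A \<subseteq> {1..d} \<and> card A = r}. beta A * smax x A\<bar>)"
        by (rule sum_abs)
      also have "\<dots> \<le> (\<Sum>r\<in>R - {0}. \<Sum>A\<in>{A. A \<subseteq> {1..d} \<and> card A = r}. \<bar>beta A\<bar>)"
      proof (rule sum_mono)
        fix r assume r: "r \<in> R - {0}"
        have "\<bar>\<Sum>A\<in>{A. A \<subseteq> {1..d} \<and> card A = r}. beta A * smax x A\<bar>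
           \<le> (\<Sum>A\<in>{A. A \<subseteq> {1..d} \<and> card A = r}. \<bar>beta A * smax x A\<bar>)" by (rule sum_abs)
        also have "\<dots> \<le> (\<Sum>A\<in>{A. A \<subseteq> {1..d} \<and> card A = r}. \<bar>beta A\<bar>)"
        proof (rule sum_mono)
          fix A assume A: "A \<in> {A. A \<subseteq> {1..d} \<and> card A = r}"
          then have "finite A" using finite_subset by blast
          moreover have "A \<noteq> {}" using A r by auto
          ultimately have "0 \<le> smax x A \<and> smax x A \<le> 1" using smax_bounds A x by blast
          then show "\<bar>beta A * smax x A\<bar> \<le> \<bar>beta A\<bar>"
            by (simp add: abs_mult mult_left_le)
        qed
        finally show "\<bar>\<Sum>A\<in>{A. A \<subseteq> {1..d} \<and> card A = r}. beta A * smax x A\<bar>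
           \<le> (\<Sum>A\<in>{A. A \<subseteq> {1..d} \<and> card A = r}. \<bar>beta A\<bar>)" .
      qed
      finally show "\<bar>\<Sum>r\<in>R - {0}. \<Sum>A\<in>{A. A \<subseteq> {1..d} \<and> card A = r}. beta A * smax x A\<bar>
         \<le> (\<Sum>r\<in>R - {0}. \<Sum>A\<in>{A. A \<subseteq> {1..d} \<and> card A = r}. \<bar>beta A\<bar>)" .
    qed
    finally show ?thesis .
  qed
  then show ?thesis by blast
qed

lemma cube_ne: "(\<lambda>_. 0) \<in> cube d" unfolding cube_def by auto

lemma Mset_bdd:
  assumes "m \<in> Mset d R" "d \<ge> 1"
  shows "bdd_above ((\<lambda>x. \<bar>m x - maxd d x\<bar>) ` cube d)"
proof -
  obtain K where K: "\<forall>x\<in>cube d. \<bar>m x\<bar> \<le> K" using Mset_bound[OF assms(1)] by blast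
  have "\<bar>m x - maxd d x\<bar> \<le> K + 1" if "x \<in> cube d" for x
    using K that maxd_bounds[OF assms(2) that] by fastforce
  then show ?thesis by (intro bdd_aboveI2) auto
qed

lemma F_upper:
  assumes "m \<in> Mset d R" "d \<ge> 1" "x \<in> cube d"
  shows "\<bar>m x - maxd d x\<bar> \<le> supnorm d (\<lambda>x. m x - maxd d x)"
  unfolding supnorm_def using Mset_bdd[OF assms(1,2)] assms(3) by (rule cSUP_upper2) auto

lemma F_nonneg:
  assumes "m \<in> Mset d R" "d \<ge> 1"
  shows "0 \<le> supnorm d (\<lambda>x. m x - maxd d x)"
  using F_upper[OF assms cube_ne] by linarith

lemma F_least:
  assumes "\<And>x. x \<in> cube d \<Longrightarrow> \<bar>m x - maxd d x\<bar> \<le> c"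
  shows "supnorm d (\<lambda>x. m x - maxd d x) \<le> c"
  unfolding supnorm_def using cube_ne assms by (intro cSUP_least) auto

definition ev :: "nat set \<Rightarrow> nat \<Rightarrow> real" where
  "ev T = (\<lambda>i. if i \<in> T then 1 else 0)"

lemma ev_cube: "ev T \<in> cube d" unfolding cube_def ev_def by auto

lemma smax_ev:
  assumes "finite A" "A \<noteq> {}"
  shows "smax (ev T) A = (if A \<inter> T \<noteq> {} then 1 else 0)"
proof (cases "A \<inter> T = {}")
  case True
  then have "ev T ` A = {0}" using assms unfolding ev_def by auto
  then show ?thesis using True unfolding smax_def by simp
next
  case False
  then obtain a where a: "a \<in> A" "a \<in> T" by auto
  have "smax (ev T) A \<in> ev T ` A" unfolding smax_def using assms by (intro Max_in) auto
  then have le: "smax (ev T) A \<le> 1" unfolding ev_def by auto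
  have "ev T a \<le> smax (ev T) A" unfolding smax_def using assms a by (intro Max_ge) auto
  then show ?thesis using le a False unfolding ev_def by auto
qed

lemma Mset_zero: "(\<lambda>x. 0) \<in> Mset d R"
  unfolding Mset_def by (rule CollectI, rule exI[of _ 0], rule exI[of _ "\<lambda>_. 0"]) simp

lemma Mset_add:
  assumes "m1 \<in> Mset d R" "m2 \<in> Mset d R"
  shows "(\<lambda>x. m1 x + m2 x) \<in> Mset d R"
proof -
  obtain b1 beta1 where m1: "m1 = (\<lambda>x. (if 0 \<in> R then b1 else 0) +
             (\<Sum>r\<in>R - {0}. \<Sum>A\<in>{A. A \<subseteq> {1..d} \<and> card A = r}. beta1 A * smax x A))"
    using assms unfolding Mset_def by blast
  obtain b2 beta2 where m2: "m2 = (\<lambda>x. (if 0 \<in> R then b2 else 0) +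
             (\<Sum>r\<in>R - {0}. \<Sum>A\<in>{A. A \<subseteq> {1..d} \<and> card A = r}. beta2 A * smax x A))"
    using assms unfolding Mset_def by blast
  show ?thesis unfolding Mset_def
    apply (rule CollectI, rule exI[of _ "b1+b2"], rule exI[of _ "\<lambda>A. beta1 A + beta2 A"])
    by (auto simp: m1 m2 sum.distrib distrib_right algebra_simps intro!: ext)
qed

lemma Mset_scale:
  assumes "m1 \<in> Mset d R"
  shows "(\<lambda>x. c * m1 x) \<in> Mset d R"
proof -
  obtain b1 beta1 where m1: "m1 = (\<lambda>x. (if 0 \<in> R then b1 else 0) +
             (\<Sum>r\<in>R - {0}. \<Sum>A\<in>{A. A \<subseteq> {1..d} \<and> card A = r}. beta1 A * smax x A))"
    using assms unfolding Mset_def by blast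
  show ?thesis unfolding Mset_def
    apply (rule CollectI, rule exI[of _ "c*b1"], rule exI[of _ "\<lambda>A. c * beta1 A"])
    apply (simp add: m1 sum_distrib_left distrib_left mult.assoc)
    done
qed

lemma Mset_sum:
  assumes "finite P" "\<And>p. p \<in> P \<Longrightarrow> f p \<in> Mset d R"
  shows "(\<lambda>x. \<Sum>p\<in>P. f p x) \<in> Mset d R"
  using assms
proof (induction P rule: finite_induct)
  case empty then show ?case using Mset_zero by simp
next
  case (insert p P)
  then show ?case using Mset_add[of "f p" d R "\<lambda>x. \<Sum>p\<in>P. f p x"] by simp
qed


lemma smax_perm:
  "smax (\<lambda>i. x (\<sigma> i)) A = smax x (\<sigma> ` A)"
  unfolding smax_def by (simp add: image_image)

lemma Mset_perm:
  assumes "m \<in> Mset d R" "\<sigma> permutes {1..d}"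
  shows "(\<lambda>x. m (\<lambda>i. x (\<sigma> i))) \<in> Mset d R"
proof -
  obtain b0 beta where m: "m = (\<lambda>x. (if 0 \<in> R then b0 else 0) +
             (\<Sum>r\<in>R - {0}. \<Sum>A\<in>{A. A \<subseteq> {1..d} \<and> card A = r}. beta A * smax x A))"
    using assms unfolding Mset_def by blast
  have inj: "inj \<sigma>" using assms(2) permutes_inj by blast
  have eq: "(\<Sum>A\<in>{A. A \<subseteq> {1..d} \<and> card A = r}. beta A * smax x (\<sigma> ` A))
     = (\<Sum>B\<in>{A. A \<subseteq> {1..d} \<and> card A = r}. beta (inv \<sigma> ` B) * smax x B)" for x r
  proof (rule sum.reindex_bij_witness[where i = "\<lambda>B. inv \<sigma> ` B" and j = "\<lambda>A. \<sigma> ` A"])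
    fix a assume a: "a \<in> {A. A \<subseteq> {1..d} \<and> card A = r}"
    show "inv \<sigma> ` \<sigma> ` a = a" using permutes_inverses[OF assms(2)] by (simp add: image_image)
    show "\<sigma> ` a \<in> {A. A \<subseteq> {1..d} \<and> card A = r}"
      using a permutes_image[OF assms(2)] card_image[OF inj_on_subset[OF inj]] by auto
    show "beta (inv \<sigma> ` \<sigma> ` a) * smax x (\<sigma> ` a) = beta a * smax x (\<sigma> ` a)"
      using permutes_inverses[OF assms(2)] by (simp add: image_image)
  next
    fix b assume b: "b \<in> {A. A \<subseteq> {1..d} \<and> card A = r}"
    show "\<sigma> ` inv \<sigma> ` b = b" using permutes_inverses[OF assms(2)] by (simp add: image_image)
    have injv: "inj (inv \<sigma>)" using permutes_inj[OF permutes_inv[OF assms(2)]] .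
    show "inv \<sigma> ` b \<in> {A. A \<subseteq> {1..d} \<and> card A = r}"
      using b permutes_image[OF permutes_inv[OF assms(2)]] card_image[OF inj_on_subset[OF injv]] by auto
  qed
  show ?thesis unfolding Mset_def
    apply (rule CollectI, rule exI[of _ b0], rule exI[of _ "\<lambda>B. beta (inv \<sigma> ` B)"])
    by (simp only: m smax_perm eq)
qed

lemma subseq_conv:
  fixes g :: "nat \<Rightarrow> 'a \<Rightarrow> real"
  assumes "finite P" "\<And>n p. p \<in> P \<Longrightarrow> \<bar>g n p\<bar> \<le> K"
  shows "\<exists>s. strict_mono s \<and> (\<forall>p\<in>P. convergent (\<lambda>n. g (s n) p))"
  using assms
proof (induction P rule: finite_induct)
  case empty
  show ?case by (rule exI[of _ id]) (simp add: strict_mono_def)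
next
  case (insert p P)
  then obtain s where s: "strict_mono s" "\<forall>q\<in>P. convergent (\<lambda>n. g (s n) q)" by auto
  have "bounded (range (\<lambda>n. g (s n) p))"
    using insert.prems by (intro boundedI[of _ K]) auto
  then obtain l t where t: "strict_mono t" "((\<lambda>n. g (s n) p) \<circ> t) \<longlonglongrightarrow> l"
    using bounded_imp_convergent_subsequence by blast
  have "strict_mono (s \<circ> t)" using s t by (simp add: strict_mono_o)
  moreover have "convergent (\<lambda>n. g ((s \<circ> t) n) p)" using t(2) by (auto simp: convergent_def o_def)
  moreover have "convergent (\<lambda>n. g ((s \<circ> t) n) q)" if "q \<in> P" for q
    using convergent_subseq_convergent[OF s(2)[rule_format, OF that] t(1)] by (simp add: o_def)
  ultimately show ?case by blast
qed


lemma exists_min: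
  assumes d1: "d \<ge> 1" and finR: "finite R"
  shows "\<exists>m\<in>Mset d R. supnorm d (\<lambda>x. m x - maxd d x)
             = (INF m'\<in>Mset d R. supnorm d (\<lambda>x. m' x - maxd d x))"
proof -
  define F where "F = (\<lambda>m. supnorm d (\<lambda>x. m x - maxd d x))"
  define L where "L = (INF m'\<in>Mset d R. F m')"
  define S where "S = (\<lambda>r. {A. A \<subseteq> {1..d} \<and> card A = r})"
  have finS: "finite (S r)" for r
    unfolding S_def by (rule finite_subset[of _ "Pow {1..d}"]) auto
  have bdd: "bdd_below (F ` Mset d R)"
    using F_nonneg[OF _ d1] unfolding F_def by (intro bdd_belowI2[of _ 0]) auto
  have ne: "Mset d R \<noteq> {}" using Mset_zero by blast
  have Lle: "L \<le> F m" if "m \<in> Mset d R" for m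
    unfolding L_def using bdd that by (rule cINF_lower)
  have "\<forall>n. \<exists>m. m \<in> Mset d R \<and> F m < L + inverse (real (Suc n))"
  proof
    fix n
    have "Inf (F ` Mset d R) < L + inverse (real (Suc n))" unfolding L_def by simp
    then show "\<exists>m. m \<in> Mset d R \<and> F m < L + inverse (real (Suc n))"
      using cINF_less_iff[OF ne bdd] by blast
  qed
  then obtain ms where ms: "\<And>n. ms n \<in> Mset d R" "\<And>n. F (ms n) < L + inverse (real (Suc n))"
    by metis
  have FL: "(\<lambda>n. F (ms n)) \<longlonglongrightarrow> L"
  proof (rule tendsto_sandwich[of "\<lambda>n. L" _ _ "\<lambda>n. L + inverse (real (Suc n))"])
    show "\<forall>\<^sub>F n in sequentially. L \<le> F (ms n)" using Lle ms(1) by simp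
    show "\<forall>\<^sub>F n in sequentially. F (ms n) \<le> L + inverse (real (Suc n))"
      using ms(2) by (simp add: less_imp_le)
    show "(\<lambda>n. L) \<longlonglongrightarrow> L" by simp
    show "(\<lambda>n. L + inverse (real (Suc n))) \<longlonglongrightarrow> L"
      using tendsto_add[OF tendsto_const LIMSEQ_inverse_real_of_nat, of L] by simp
  qed
  have "\<forall>n. \<exists>b beta. ms n = (\<lambda>x. (if 0 \<in> R then b else 0) +
             (\<Sum>r\<in>R - {0}. \<Sum>A\<in>S r. beta A * smax x A))"
    using ms(1) unfolding Mset_def S_def by blast
  then obtain bs bes where rep: "\<And>n. ms n = (\<lambda>x. (if 0 \<in> R then bs n else 0) +
             (\<Sum>r\<in>R - {0}. \<Sum>A\<in>S r. bes n A * smax x A))"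
    by metis
  have bnd: "\<bar>ms n (ev T)\<bar> \<le> L + 2" for n T
  proof -
    have "\<bar>ms n (ev T) - maxd d (ev T)\<bar> \<le> F (ms n)"
      unfolding F_def by (rule F_upper[OF ms(1) d1 ev_cube])
    moreover have "inverse (real (Suc n)) \<le> 1" by (simp add: inverse_le_1_iff)
    moreover note ms(2)[of n] maxd_bounds[OF d1 ev_cube[of T d]]
    ultimately show ?thesis by linarith
  qed
  obtain s where s: "strict_mono s" "\<forall>T\<in>Pow {1..d}. convergent (\<lambda>n. ms (s n) (ev T))"
    using subseq_conv[of "Pow {1..d}" "\<lambda>n T. ms n (ev T)" "L+2"] bnd by auto
  define mm where "mm = (\<lambda>n. ms (s n))"
  define bb where "bb = (\<lambda>n. bes (s n))"
  have rep': "mm n x = (if 0 \<in> R then bs (s n) else 0) +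
             (\<Sum>r\<in>R - {0}. \<Sum>A\<in>S r. bb n A * smax x A)" for n x
    unfolding mm_def bb_def by (subst rep) simp
  have SA: "finite A \<and> A \<noteq> {}" if "r \<in> R - {0}" "A \<in> S r" for r A
    using that finite_subset[of A "{1..d}"] unfolding S_def by auto
  have ev_empty: "mm n (ev {}) = (if 0 \<in> R then bs (s n) else 0)" for n
  proof -
    have "(\<Sum>r\<in>R - {0}. \<Sum>A\<in>S r. bb n A * smax (ev {}) A) = 0"
      using SA smax_ev by (intro sum.neutral ballI) simp
    then show ?thesis by (simp add: rep')
  qed
  have hform: "mm n (ev {1..d}) - mm n (ev ({1..d} - A0)) =
     (\<Sum>r\<in>R - {0}. \<Sum>A\<in>S r. if A \<subseteq> A0 then bb n A else 0)" if A0: "A0 \<subseteq> {1..d}" for n A0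
  proof -
    have "mm n (ev {1..d}) - mm n (ev ({1..d} - A0)) =
      (\<Sum>r\<in>R - {0}. \<Sum>A\<in>S r. bb n A * smax (ev {1..d}) A - bb n A * smax (ev ({1..d} - A0)) A)"
      by (simp add: rep' sum_subtractf)
    also have "\<dots> = (\<Sum>r\<in>R - {0}. \<Sum>A\<in>S r. if A \<subseteq> A0 then bb n A else 0)"
    proof (intro sum.cong refl)
      fix r A assume r: "r \<in> R - {0}" and A: "A \<in> S r"
      have Asub: "A \<subseteq> {1..d}" using A unfolding S_def by auto
      have "A \<inter> {1..d} \<noteq> {}" using SA[OF r A] Asub by auto
      moreover have "(A \<inter> ({1..d} - A0) \<noteq> {}) = (\<not> A \<subseteq> A0)" using Asub by auto
      ultimately show "bb n A * smax (ev {1..d}) A - bb n A * smax (ev ({1..d} - A0)) A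
          = (if A \<subseteq> A0 then bb n A else 0)"
        using smax_ev[of A] SA[OF r A] by auto
    qed
    finally show ?thesis .
  qed
  have convk: "\<forall>A0. A0 \<subseteq> {1..d} \<longrightarrow> card A0 \<in> R - {0} \<longrightarrow> card A0 = k \<longrightarrow> convergent (\<lambda>n. bb n A0)" for k
  proof (induction k rule: less_induct)
    case (less k)
    show ?case
    proof (intro allI impI)
      fix A0 assume A0: "A0 \<subseteq> {1..d}" "card A0 \<in> R - {0}" "card A0 = k"
      have finA0: "finite A0" using A0 finite_subset by blast
      have split: "bb n A0 = (mm n (ev {1..d}) - mm n (ev ({1..d} - A0))) -
          (\<Sum>r\<in>R - {0}. \<Sum>A\<in>S r. if A \<subset> A0 then bb n A else 0)" for n
      proof -
        have e1: "\<And>A. (if A \<subseteq> A0 then bb n A else 0) = (if A = A0 then bb n A else 0) + (if A \<subset> A0 then bb n A else 0)"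
          by auto
        have "(\<Sum>r\<in>R - {0}. \<Sum>A\<in>S r. if A \<subseteq> A0 then bb n A else 0) =
          (\<Sum>r\<in>R - {0}. \<Sum>A\<in>S r. if A = A0 then bb n A else 0) + (\<Sum>r\<in>R - {0}. \<Sum>A\<in>S r. if A \<subset> A0 then bb n A else 0)"
          by (simp only: e1 sum.distrib)
        moreover have "(\<Sum>r\<in>R - {0}. \<Sum>A\<in>S r. if A = A0 then bb n A else 0) = bb n A0"
        proof -
          have "(\<Sum>r\<in>R - {0}. \<Sum>A\<in>S r. if A = A0 then bb n A else 0) =
                (\<Sum>r\<in>R - {0}. if r = card A0 then bb n A0 else 0)"
          proof (rule sum.cong[OF refl])
            fix r
            have "(\<Sum>A\<in>S r. if A = A0 then bb n A else 0) = (if A0 \<in> S r then bb n A0 else 0)"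
              by (rule sum.delta[OF finS])
            also have "\<dots> = (if r = card A0 then bb n A0 else 0)" using A0 unfolding S_def by auto
            finally show "(\<Sum>A\<in>S r. if A = A0 then bb n A else 0) = (if r = card A0 then bb n A0 else 0)" .
          qed
          also have "\<dots> = bb n A0" using A0(2) finR by (subst sum.delta) auto
          finally show ?thesis .
        qed
        ultimately show ?thesis using hform[OF A0(1), of n] by linarith
      qed
      have eqf: "(\<lambda>n. bb n A0) = (\<lambda>n. (mm n (ev {1..d}) - mm n (ev ({1..d} - A0))) -
          (\<Sum>r\<in>R - {0}. \<Sum>A\<in>S r. if A \<subset> A0 then bb n A else 0))"
        by (intro ext) (rule split)
      show "convergent (\<lambda>n. bb n A0)" unfolding eqf
      proof (intro convergent_diff convergent_sum)
        show "convergent (\<lambda>n. mm n (ev {1..d}))" using s(2) unfolding mm_def by auto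
        show "convergent (\<lambda>n. mm n (ev ({1..d} - A0)))" using s(2) unfolding mm_def by auto
        fix r A assume r: "r \<in> R - {0}" and A: "A \<in> S r"
        show "convergent (\<lambda>n. if A \<subset> A0 then bb n A else 0)"
        proof (cases "A \<subset> A0")
          case True
          have "card A < k" using psubset_card_mono[OF finA0 True] A0(3) by simp
          moreover have "A \<subseteq> {1..d}" "card A \<in> R - {0}" using A r unfolding S_def by auto
          ultimately have "convergent (\<lambda>n. bb n A)" using less.IH by blast
          then show ?thesis using True by simp
        next
          case False then show ?thesis by (simp add: convergent_const)
        qed
      qed
    qed
  qed
  define bstar where "bstar = (\<lambda>A. lim (\<lambda>n. bb n A))"
  define b0 where "b0 = lim (\<lambda>n. mm n (ev {}))"
  have tb: "(\<lambda>n. bb n A) \<longlonglongrightarrow> bstar A" if "r \<in> R - {0}" "A \<in> S r" for r A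
  proof -
    have "convergent (\<lambda>n. bb n A)" using convk that unfolding S_def by auto
    then show ?thesis unfolding bstar_def by (simp add: convergent_LIMSEQ_iff)
  qed
  have t0: "(\<lambda>n. mm n (ev {})) \<longlonglongrightarrow> b0"
  proof -
    have "convergent (\<lambda>n. mm n (ev {}))" using s(2) unfolding mm_def by auto
    then show ?thesis unfolding b0_def by (simp add: convergent_LIMSEQ_iff)
  qed
  define mstar where "mstar = (\<lambda>x. b0 + (\<Sum>r\<in>R - {0}. \<Sum>A\<in>S r. bstar A * smax x A))"
  have mstar_in: "mstar \<in> Mset d R"
  proof (cases "0 \<in> R")
    case True
    show ?thesis unfolding Mset_def mstar_def S_def
      by (rule CollectI, rule exI[of _ b0], rule exI[of _ bstar]) (simp add: True)
  next
    case False
    then have "(\<lambda>n. mm n (ev {})) = (\<lambda>n. 0)" using ev_empty by auto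
    then have b00: "b0 = 0" unfolding b0_def by (simp add: limI)
    show ?thesis unfolding Mset_def mstar_def S_def
      by (rule CollectI, rule exI[of _ 0], rule exI[of _ bstar]) (simp add: False b00)
  qed
  have pw: "(\<lambda>n. mm n x) \<longlonglongrightarrow> mstar x" for x
  proof -
    have "mm n x = mm n (ev {}) + (\<Sum>r\<in>R - {0}. \<Sum>A\<in>S r. bb n A * smax x A)" for n
      using rep'[of n x] ev_empty[of n] by simp
    then have "(\<lambda>n. mm n x) = (\<lambda>n. mm n (ev {}) + (\<Sum>r\<in>R - {0}. \<Sum>A\<in>S r. bb n A * smax x A))"
      by (intro ext)
    also have "\<dots> \<longlonglongrightarrow> mstar x"
      unfolding mstar_def by (intro tendsto_add t0 tendsto_sum tendsto_mult_right tb) auto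
    finally show ?thesis .
  qed
  have FLs: "(\<lambda>n. F (mm n)) \<longlonglongrightarrow> L"
    using LIMSEQ_subseq_LIMSEQ[OF FL s(1)] unfolding mm_def by (simp add: o_def)
  have "\<bar>mstar x - maxd d x\<bar> \<le> L" if x: "x \<in> cube d" for x
  proof (rule LIMSEQ_le[OF _ FLs])
    show "(\<lambda>n. \<bar>mm n x - maxd d x\<bar>) \<longlonglongrightarrow> \<bar>mstar x - maxd d x\<bar>"
      by (intro tendsto_rabs tendsto_diff pw tendsto_const)
    show "\<exists>N. \<forall>n\<ge>N. \<bar>mm n x - maxd d x\<bar> \<le> F (mm n)"
      unfolding F_def mm_def using F_upper[OF ms(1) d1 x] by blast
  qed
  then have "F mstar \<le> L" unfolding F_def by (rule F_least)
  moreover have "L \<le> F mstar" by (rule Lle[OF mstar_in])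
  ultimately show ?thesis using mstar_in unfolding F_def L_def by (intro bexI[of _ mstar]) auto
qed


theorem lemma5:
  fixes d :: nat and R :: "nat set"
  assumes "d \<ge> 2" and "R \<subseteq> {0..d-1}"
  shows "(\<exists>m\<in>Mset d R. supnorm d (\<lambda>x. m x - maxd d x)
             = (INF m'\<in>Mset d R. supnorm d (\<lambda>x. m' x - maxd d x)))
       \<and> (\<exists>m\<in>Msym d R. supnorm d (\<lambda>x. m x - maxd d x)
             = (INF m'\<in>Msym d R. supnorm d (\<lambda>x. m' x - maxd d x)))
       \<and> (INF m\<in>Mset d R. supnorm d (\<lambda>x. m x - maxd d x))
           = (INF m\<in>Msym d R. supnorm d (\<lambda>x. m x - maxd d x))"
proof -
  have d1: "d \<ge> 1" using assms by simp
  have finR: "finite R" using assms(2) finite_subset by blast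
  define F where "F = (\<lambda>m. supnorm d (\<lambda>x. m x - maxd d x))"
  obtain mo where mo: "mo \<in> Mset d R" "F mo = (INF m'\<in>Mset d R. F m')"
    using exists_min[OF d1 finR] unfolding F_def by blast
  define P where "P = {\<sigma>. \<sigma> permutes {1..d}}"
  have finP: "finite P" unfolding P_def by (rule finite_permutations) simp
  define N where "N = real (card P)"
  have Npos: "N > 0" unfolding N_def P_def using card_permutations[of "{1..d}" d] by simp
  define msym where "msym = (\<lambda>x. (1/N) * (\<Sum>\<sigma>\<in>P. mo (\<lambda>i. x (\<sigma> i))))"
  have msym_M: "msym \<in> Mset d R"
    unfolding msym_def
    by (rule Mset_scale, rule Mset_sum[OF finP], rule Mset_perm[OF mo(1)]) (simp add: P_def)
  have msym_sym: "msym x = msym (\<lambda>i. x (\<tau> i))" if tau: "\<tau> permutes {1..d}" for \<tau> x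
  proof -
    have "(\<Sum>\<sigma>\<in>P. mo (\<lambda>i. x (\<sigma> i))) = (\<Sum>\<sigma>\<in>P. mo (\<lambda>i. x ((\<tau> \<circ> \<sigma>) i)))"
      unfolding P_def by (rule setum_permutations_compose_left[OF tau])
    then show ?thesis unfolding msym_def by simp
  qed
  have msym_S: "msym \<in> Msym d R" unfolding Msym_def using msym_M msym_sym by blast
  have maxd_perm: "maxd d (\<lambda>i. x (\<sigma> i)) = maxd d x" if "\<sigma> \<in> P" for \<sigma> x
  proof -
    have "(\<lambda>i. x (\<sigma> i)) ` {1..d} = x ` (\<sigma> ` {1..d})" by (simp add: image_image)
    also have "\<dots> = x ` {1..d}" using that permutes_image[of \<sigma> "{1..d}"] unfolding P_def by simp
    finally show ?thesis unfolding maxd_def by simp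
  qed
  have cube_perm: "(\<lambda>i. x (\<sigma> i)) \<in> cube d" if "\<sigma> \<in> P" "x \<in> cube d" for \<sigma> x
    using that permutes_in_image[of \<sigma> "{1..d}"] unfolding P_def cube_def by auto
  have "supnorm d (\<lambda>x. msym x - maxd d x) \<le> F mo"
  proof (rule F_least)
    fix x assume x: "x \<in> cube d"
    have "msym x - maxd d x = (1/N) * (\<Sum>\<sigma>\<in>P. mo (\<lambda>i. x (\<sigma> i)) - maxd d (\<lambda>i. x (\<sigma> i)))"
      using Npos by (simp add: msym_def maxd_perm sum_subtractf N_def field_simps)
    also have "\<bar>\<dots>\<bar> \<le> (1/N) * (\<Sum>\<sigma>\<in>P. \<bar>mo (\<lambda>i. x (\<sigma> i)) - maxd d (\<lambda>i. x (\<sigma> i))\<bar>)"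
      using Npos by (simp add: abs_mult divide_right_mono sum_abs)
    also have "\<dots> \<le> (1/N) * (\<Sum>\<sigma>\<in>P. F mo)"
      using Npos F_upper[OF mo(1) d1 cube_perm[OF _ x]] unfolding F_def
      by (intro mult_left_mono sum_mono) auto
    also have "\<dots> = F mo" using Npos by (simp add: N_def)
    finally show "\<bar>msym x - maxd d x\<bar> \<le> F mo" .
  qed
  then have "F msym \<le> F mo" by (simp add: F_def)
  have subs: "Msym d R \<subseteq> Mset d R" unfolding Msym_def by auto
  have bddM: "bdd_below (F ` Mset d R)"
    using F_nonneg[OF _ d1] unfolding F_def by (intro bdd_belowI2[of _ 0]) auto
  have bddS: "bdd_below (F ` Msym d R)"
    using F_nonneg[OF _ d1] subs unfolding F_def by (intro bdd_belowI2[of _ 0]) auto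
  have L_Ls: "(INF m'\<in>Mset d R. F m') \<le> (INF m'\<in>Msym d R. F m')"
    using msym_S subs by (intro cINF_greatest) (auto intro: cINF_lower[OF bddM])
  have Ls_le: "(INF m'\<in>Msym d R. F m') \<le> F msym" by (rule cINF_lower[OF bddS msym_S])
  have eq1: "F msym = (INF m'\<in>Msym d R. F m')"
    using L_Ls Ls_le \<open>F msym \<le> F mo\<close> mo(2) by linarith
  have eq2: "(INF m'\<in>Mset d R. F m') = (INF m'\<in>Msym d R. F m')"
    using L_Ls Ls_le \<open>F msym \<le> F mo\<close> mo(2) by linarith
  show ?thesis
    using mo msym_S eq1 eq2 unfolding F_def by blast
qed

end
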